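(* Let $M>0$, let $t:\mathbb{Z}_{\ge3}\to\mathbb{R}$ be a function such that there is $c>0$ with $t(d)\ge c\log d$ for all $d\ge3$, and let $(\sigma_d)_{d\ge3},(\tau_d)_{d\ge3}$ be real sequences such that $\{t(d)\sigma_d:d\ge3\}$ is bounded and $\lim_{d\to\infty}\tau_d=0$. Then the double series $$\sum_{d\ge3\,:\,t(d)(1-\sigma_d)>1}\ \sum_{m\ge2}F_d(m)\left(\frac{M\,d\,m^{\sigma_d}\log(m)^{\tau_d}}{\varphi(m)\log(m)}\right)^{t(d)}$$ converges.
   Context: $F_d(m)$ denotes the number of even primitive Dirichlet characters of order $d$ and conductor $m$ (note $F_d(1)=0$ for $d\ge3$, so the term $m=1$ is omitted); $\varphi$ is Euler's totient function. *)

theory Defs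
  imports "HOL-Analysis.Analysis" "HOL-Number_Theory.Number_Theory"
begin

definition dirichlet_char :: "nat \<Rightarrow> (nat \<Rightarrow> complex) \<Rightarrow> bool" where
  "dirichlet_char m chi \<longleftrightarrow> m \<ge> 1 \<and> (\<forall>n. chi (n + m) = chi n)
     \<and> (\<forall>n. \<not> coprime n m \<longrightarrow> chi n = 0)
     \<and> (\<forall>a b. chi (a * b) = chi a * chi b) \<and> chi 1 = 1"

text \<open>Primitive: the conductor equals m, i.e. for no proper divisor q of m is
  the character trivial on units congruent to 1 mod q.\<close>
definition primitive_char :: "nat \<Rightarrow> (nat \<Rightarrow> complex) \<Rightarrow> bool" where
  "primitive_char m chi \<longleftrightarrow> (\<forall>q. q dvd m \<and> q < m \<longrightarrow>
     \<not> (\<forall>a. coprime a m \<and> [a = 1] (mod q) \<longrightarrow> chi a = 1))"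

definition char_order_is :: "nat \<Rightarrow> (nat \<Rightarrow> complex) \<Rightarrow> nat \<Rightarrow> bool" where
  "char_order_is m chi d \<longleftrightarrow> d > 0 \<and> (\<forall>n. coprime n m \<longrightarrow> chi n ^ d = 1)
     \<and> (\<forall>k. 0 < k \<and> k < d \<longrightarrow> \<not> (\<forall>n. coprime n m \<longrightarrow> chi n ^ k = 1))"

text \<open>Even: chi(-1) = 1, i.e. chi(m-1) = 1.\<close>
definition even_char :: "nat \<Rightarrow> (nat \<Rightarrow> complex) \<Rightarrow> bool" where
  "even_char m chi \<longleftrightarrow> chi (m - 1) = 1"

definition F :: "nat \<Rightarrow> nat \<Rightarrow> nat" where
  "F d m = card {chi. dirichlet_char m chi \<and> primitive_char m chi \<and> char_order_is m chi d \<and> even_char m chi}"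

end

theory Submission
  imports Defs
begin


lemma dc_m: "dirichlet_char m chi \<Longrightarrow> m \<ge> 1"
  by (simp add: dirichlet_char_def)

lemma dc_mod:
  assumes "dirichlet_char m chi"
  shows "chi n = chi (n mod m)"
proof -
  have per: "\<And>n. chi (n + m) = chi n" using assms by (simp add: dirichlet_char_def)
  have "\<And>q r. chi (r + q * m) = chi r"
  proof -
    fix q r show "chi (r + q * m) = chi r"
    proof (induction q)
      case (Suc q)
      have "chi (r + Suc q * m) = chi ((r + q * m) + m)" by (simp add: algebra_simps)
      also have "\<dots> = chi r" using per Suc by simp
      finally show ?case .
    qed simp
  qed
  from this[of "n mod m" "n div m"] show ?thesis by simp
qed

lemma dc_cong:
  assumes "dirichlet_char m chi" "[a = b] (mod m)"
  shows "chi a = chi b"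
  using assms dc_mod[OF assms(1), of a] dc_mod[OF assms(1), of b] by (simp add: cong_def)

lemma dc_mult: "dirichlet_char m chi \<Longrightarrow> chi (a * b) = chi a * chi b"
  by (simp add: dirichlet_char_def)

lemma dc_one: "dirichlet_char m chi \<Longrightarrow> chi 1 = 1"
  by (simp add: dirichlet_char_def)

lemma dc_one' [simp]: "dirichlet_char m chi \<Longrightarrow> chi (Suc 0) = 1"
  using dc_one by simp

lemma dc_zero: "dirichlet_char m chi \<Longrightarrow> \<not> coprime n m \<Longrightarrow> chi n = 0"
  by (simp add: dirichlet_char_def)

lemma dc_power: "dirichlet_char m chi \<Longrightarrow> chi (a ^ k) = chi a ^ k"
  by (induction k) (simp_all add: dc_one dc_mult)

lemma dc_prod: "dirichlet_char m chi \<Longrightarrow> chi (\<Prod>i\<in>I. f i) = (\<Prod>i\<in>I. chi (f i))"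
proof (induction I rule: infinite_finite_induct)
  case (infinite A) then show ?case by (simp add: dc_one)
next
  case empty then show ?case by (simp add: dc_one)
next
  case (insert x F) then show ?case by (simp add: dc_mult)
qed

lemma char_count_generic:
  fixes I :: "'i set" and b e :: "'i \<Rightarrow> nat" and d m :: nat
  assumes fin: "finite I" and d: "d > 0"
    and e_pos: "\<And>i. i \<in> I \<Longrightarrow> e i > 0"
    and be: "\<And>i. i \<in> I \<Longrightarrow> [b i ^ e i = 1] (mod m)"
    and gen: "\<And>n. coprime n m \<Longrightarrow> \<exists>x. [n = (\<Prod>i\<in>I. b i ^ x i)] (mod m)"
  defines "X \<equiv> {chi. dirichlet_char m chi \<and> (\<forall>n. coprime n m \<longrightarrow> chi n ^ d = 1)}"
  shows "finite X \<and> card X \<le> (\<Prod>i\<in>I. min d (e i))"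
proof -
  define R where "R i = {z::complex. z ^ d = 1 \<and> z ^ e i = 1}" for i
  have finR: "finite (R i)" for i
  proof (rule finite_subset)
    show "R i \<subseteq> {z::complex. z ^ d = 1}" unfolding R_def by blast
    show "finite {z::complex. z ^ d = 1}" using finite_roots_unity[of d] d by simp
  qed
  have cardR: "card (R i) \<le> min d (e i)" if "i \<in> I" for i
  proof -
    have "card (R i) \<le> card {z::complex. z ^ d = 1}"
    proof (rule card_mono)
      show "R i \<subseteq> {z::complex. z ^ d = 1}" unfolding R_def by blast
      show "finite {z::complex. z ^ d = 1}" using finite_roots_unity[of d] d by simp
    qed
    moreover have "card (R i) \<le> card {z::complex. z ^ e i = 1}"
    proof (rule card_mono)
      show "R i \<subseteq> {z::complex. z ^ e i = 1}" unfolding R_def by blast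
      show "finite {z::complex. z ^ e i = 1}" using finite_roots_unity[of "e i"] e_pos[OF that] by simp
    qed
    ultimately show ?thesis using card_roots_unity_eq[OF d] card_roots_unity_eq[OF e_pos[OF that]]
      by simp
  qed
  define \<Phi> where "\<Phi> chi = restrict (\<lambda>i. chi (b i)) I" for chi :: "nat \<Rightarrow> complex"
  have cop_b: "coprime (b i) m" if "i \<in> I" for i
  proof -
    have "coprime (1::nat) m" by simp
    hence "coprime (b i ^ e i) m" using cong_imp_coprime[OF cong_sym[OF be[OF that]]] by blast
    thus ?thesis using e_pos[OF that] by simp
  qed
  have img: "\<Phi> ` X \<subseteq> PiE I R"
  proof
    fix y assume "y \<in> \<Phi> ` X"
    then obtain chi where chi: "chi \<in> X" and y: "y = \<Phi> chi" by auto
    have dc: "dirichlet_char m chi" using chi by (simp add: X_def)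
    have "chi (b i) \<in> R i" if "i \<in> I" for i
    proof -
      have "chi (b i) ^ d = 1" using chi cop_b[OF that] by (simp add: X_def)
      moreover have "chi (b i) ^ e i = 1"
        using dc_cong[OF dc be[OF that]] dc_power[OF dc] dc_one[OF dc] by simp
      ultimately show ?thesis by (simp add: R_def)
    qed
    thus "y \<in> PiE I R" unfolding y \<Phi>_def by (simp add: restrict_PiE_iff)
  qed
  have inj: "inj_on \<Phi> X"
  proof (rule inj_onI)
    fix chi1 chi2 assume c1: "chi1 \<in> X" and c2: "chi2 \<in> X" and eq: "\<Phi> chi1 = \<Phi> chi2"
    have dc1: "dirichlet_char m chi1" and dc2: "dirichlet_char m chi2"
      using c1 c2 by (auto simp: X_def)
    have eqb: "chi1 (b i) = chi2 (b i)" if "i \<in> I" for i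
      using fun_cong[OF eq, of i] that by (simp add: \<Phi>_def)
    show "chi1 = chi2"
    proof
      fix n
      show "chi1 n = chi2 n"
      proof (cases "coprime n m")
        case True
        then obtain x where x: "[n = (\<Prod>i\<in>I. b i ^ x i)] (mod m)" using gen by blast
        have "chi1 n = (\<Prod>i\<in>I. chi1 (b i) ^ x i)"
          by (simp only: dc_cong[OF dc1 x] dc_prod[OF dc1] dc_power[OF dc1])
        also have "\<dots> = (\<Prod>i\<in>I. chi2 (b i) ^ x i)" using eqb by simp
        also have "\<dots> = chi2 n"
          by (simp only: dc_cong[OF dc2 x] dc_prod[OF dc2] dc_power[OF dc2])
        finally show ?thesis .
      next
        case False
        then show ?thesis using dc_zero[OF dc1] dc_zero[OF dc2] by simp
      qed
    qed
  qed
  have finP: "finite (PiE I R)" using fin finR by (intro finite_PiE) auto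
  have "finite (\<Phi> ` X)" using img finP by (rule finite_subset)
  hence "finite X" using inj by (rule finite_imageD)
  moreover have "card X \<le> card (PiE I R)" by (rule card_inj_on_le[OF inj img finP])
  moreover have "card (PiE I R) = (\<Prod>i\<in>I. card (R i))" by (rule card_PiE[OF fin])
  moreover have "(\<Prod>i\<in>I. card (R i)) \<le> (\<Prod>i\<in>I. min d (e i))"
    by (rule prod_mono) (use cardR in auto)
  ultimately show ?thesis by simp
qed



lemma twopow_split: "k \<ge> 2 \<Longrightarrow> (2::nat) ^ k = 4 * 2 ^ (k - 2)"
proof -
  assume "k \<ge> 2"
  then have "k = (k - 2) + 2" by simp
  then have "(2::nat) ^ k = 2 ^ (k - 2) * 2 ^ 2" by (metis power_add)
  thus ?thesis by simp
qed

lemma five_pow_mod4: "(5::nat) ^ i mod 4 = 1"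
proof -
  have "[(5::nat) ^ i = 1 ^ i] (mod 4)" by (rule cong_pow) (simp add: cong_def)
  thus ?thesis by (simp add: cong_def)
qed

lemma twopow_mod4_gen:
  assumes k: "k \<ge> 2" and n: "n mod 4 = (1::nat)"
  shows "\<exists>i. [n = 5 ^ i] (mod 2 ^ k)"
proof (cases "k = 2")
  case True
  then show ?thesis using n by (intro exI[of _ 0]) (simp add: cong_def)
next
  case False
  hence k3: "k \<ge> 3" using k by simp
  define N where "N = (2::nat) ^ (k - 2)"
  have two: "(2::nat) ^ k = 4 * N" using twopow_split[OF k] by (simp add: N_def)
  define U where "U = {x::nat. x < 2 ^ k \<and> x mod 4 = 1}"
  have U_eq: "U = (\<lambda>j. 4 * j + 1) ` {..<N}"
  proof -
  have "x \<in> U \<longleftrightarrow> x \<in> (\<lambda>j. 4 * j + 1) ` {..<N}" for x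
  proof
    assume "x \<in> U"
    hence x: "x < 4 * N" "x mod 4 = 1" by (auto simp: U_def two)
    hence "x = 4 * (x div 4) + 1" by presburger
    moreover have "x div 4 < N" using x by simp
    ultimately show "x \<in> (\<lambda>j. 4 * j + 1) ` {..<N}" by blast
  next
    assume "x \<in> (\<lambda>j. 4 * j + 1) ` {..<N}"
    then obtain j where "j < N" "x = 4 * j + 1" by auto
    thus "x \<in> U" by (auto simp: U_def two)
  qed
  thus ?thesis by blast
  qed
  have cardU: "card U = N" unfolding U_eq by (subst card_image) (auto simp: inj_on_def)
  have cop: "coprime ((2::nat) ^ k) 5" by simp
  have ord: "ord (2 ^ k) (5::nat) = N" using ord_twopow_3_5[OF k3, of 5] by (simp add: N_def)
  have inj: "inj_on (\<lambda>i. (5::nat) ^ i mod 2 ^ k) {..<N}" using inj_power_mod[OF cop] ord by simp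
  have sub: "(\<lambda>i. (5::nat) ^ i mod 2 ^ k) ` {..<N} \<subseteq> U"
  proof
    fix y assume "y \<in> (\<lambda>i. (5::nat) ^ i mod 2 ^ k) ` {..<N}"
    then obtain i where y: "y = 5 ^ i mod 2 ^ k" by auto
    have "y mod 4 = 5 ^ i mod 4" unfolding y two by (simp add: mod_mod_cancel)
    thus "y \<in> U" using five_pow_mod4[of i] by (simp add: U_def y)
  qed
  have "(\<lambda>i. (5::nat) ^ i mod 2 ^ k) ` {..<N} = U"
    by (rule card_subset_eq) (use sub cardU card_image[OF inj] in \<open>auto simp: U_eq\<close>)
  moreover have "n mod 2 ^ k \<in> U"
    using n unfolding U_def two by (simp add: mod_mod_cancel N_def)
  ultimately obtain i where "5 ^ i mod 2 ^ k = n mod 2 ^ k" by (metis (no_types, lifting) imageE)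
  hence "[n = 5 ^ i] (mod 2 ^ k)" by (simp add: cong_def)
  thus ?thesis by blast
qed

lemma twopow_m1_sq: "k > 0 \<Longrightarrow> [((2::nat) ^ k - 1) ^ 2 = 1] (mod 2 ^ k)"
proof -
  assume k: "k > 0"
  have "(1::nat) \<le> 2 ^ k" by simp
  hence i: "int (2 ^ k - 1) = 2 ^ k - 1" by (simp add: of_nat_diff)
  have "[(2 ^ k - 1) ^ 2 = (1::int)] (mod 2 ^ k)"
    unfolding cong_iff_dvd_diff by (simp add: power2_eq_square algebra_simps)
  hence "[int ((2 ^ k - 1) ^ 2) = int 1] (mod int (2 ^ k))" using i by simp
  thus ?thesis by (subst (asm) cong_int_iff)
qed

lemma local_gens:
  assumes p: "prime p" and k: "k > 0"
  shows "\<exists>g e. (\<forall>j\<in>{0::nat,1}. e j > (0::nat) \<and> [g j ^ e j = 1] (mod p ^ k)) \<and> e 0 * e 1 \<le> p ^ k \<and>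
     (\<forall>n. coprime n p \<longrightarrow> (\<exists>x0 x1. [n = g 0 ^ x0 * g (1::nat) ^ x1] (mod p ^ k)))"
proof (cases "p = 2")
  case False
  hence oddp: "odd p" using p primes_dvd_imp_eq two_is_prime_nat by blast
  obtain g where g: "\<forall>k>0. residue_primroot (p ^ k) g"
    using residue_primroot_odd_prime_power_exists[OF p oddp] by blast
  define q where "q = p ^ k"
  have q1: "q > 1" unfolding q_def by (rule one_less_power[OF prime_gt_1_nat[OF p] k])
  have rg: "residue_primroot q g" using g k by (simp add: q_def)
  hence copg: "coprime g q" by (simp add: residue_primroot_def coprime_commute)
  let ?G = "\<lambda>j::nat. if j = 0 then g else 1"
  let ?E = "\<lambda>j::nat. if j = 0 then totient q else 1"
  have A: "\<forall>j\<in>{0::nat,1}. ?E j > 0 \<and> [?G j ^ ?E j = 1] (mod p ^ k)"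
    using q1 euler_theorem[OF copg] prime_gt_0_nat[OF p] by (auto simp: q_def)
  have B: "?E 0 * ?E 1 \<le> p ^ k" using totient_le[of q] by (simp add: q_def)
  have C: "\<forall>n. coprime n p \<longrightarrow> (\<exists>x0 x1. [n = ?G 0 ^ x0 * ?G 1 ^ x1] (mod p ^ k))"
  proof (intro allI impI)
    fix n assume "coprime n p"
    hence cn: "coprime n q" by (simp add: q_def)
    have "n mod q \<in> totatives q"
    proof -
      have "coprime (n mod q) q" using cn q1 by (simp add: coprime_mod_left_iff)
      moreover have "n mod q \<noteq> 0"
      proof
        assume "n mod q = 0"
        hence "q dvd n" by auto
        hence "q dvd gcd n q" by simp
        thus False using cn q1 by simp
      qed
      moreover have "n mod q \<le> q" using q1 by (simp add: less_imp_le)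
      ultimately show ?thesis by (simp add: in_totatives_iff)
    qed
    hence "n mod q \<in> (\<lambda>i. g ^ i mod q) ` {..<totient q}"
      using residue_primroot_is_generator[OF q1 rg] by (simp add: bij_betw_def)
    then obtain i where "n mod q = g ^ i mod q" by blast
    hence "g ^ i mod q = n mod q" by simp
    hence "[n = ?G 0 ^ i * ?G 1 ^ 0] (mod p ^ k)" by (simp add: cong_def q_def)
    thus "\<exists>x0 x1. [n = ?G 0 ^ x0 * ?G 1 ^ x1] (mod p ^ k)" by blast
  qed
  show ?thesis
    apply (rule exI[of _ ?G], rule exI[of _ ?E])
    using A B C by blast
next
  case True
  let ?G = "\<lambda>j::nat. if j = 0 then 5 else (2::nat) ^ k - 1"
  let ?E = "\<lambda>j::nat. if j = 0 then 2 ^ (k - 1) else (2::nat)"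
  have A: "\<forall>j\<in>{0::nat,1}. ?E j > 0 \<and> [?G j ^ ?E j = 1] (mod 2 ^ k)"
  proof -
    have t: "totient ((2::nat) ^ k) = 2 ^ (k - 1)" using totient_prime_power[OF two_is_prime_nat k] by simp
    have c5: "coprime (5::nat) (2 ^ k)" by simp
    show ?thesis using euler_theorem[OF c5] t twopow_m1_sq[OF k] by auto
  qed
  have B: "?E 0 * ?E 1 \<le> 2 ^ k" using k by (cases k) auto
  have C: "\<forall>n. coprime n 2 \<longrightarrow> (\<exists>x0 x1. [n = ?G 0 ^ x0 * ?G 1 ^ x1] (mod 2 ^ k))"
  proof (intro allI impI)
    fix n :: nat assume "coprime n 2"
    hence odd: "odd n" by simp
    show "\<exists>x0 x1. [n = ?G 0 ^ x0 * ?G 1 ^ x1] (mod 2 ^ k)"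
    proof (cases "k = 1")
      case True
      then show ?thesis using odd by (intro exI[of _ 0] exI[of _ 0]) (simp add: cong_def odd_iff_mod_2_eq_one)
    next
      case False
      hence k2: "k \<ge> 2" using k by simp
      have n4: "n mod 4 = 1 \<or> n mod 4 = 3" using odd by presburger
      then show ?thesis
      proof
        assume "n mod 4 = 1"
        then obtain i where "[n = 5 ^ i] (mod 2 ^ k)" using twopow_mod4_gen[OF k2] by blast
        hence "[n = ?G 0 ^ i * ?G 1 ^ 0] (mod 2 ^ k)" by simp
        thus ?thesis by blast
      next
        assume n3: "n mod 4 = 3"
        define h where "h = (2::nat) ^ k - 1"
        have two: "(2::nat) ^ k = 4 * 2 ^ (k - 2)" using twopow_split[OF k2] .
        have h4: "h mod 4 = 3"
        proof -
          have "h + 1 = 4 * 2 ^ (k - 2)" using two by (simp add: h_def)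
          thus ?thesis by presburger
        qed
        have "(n * h) mod 4 = 1" using n3 h4 by (simp add: mod_mult_eq[symmetric])
        then obtain i where i: "[n * h = 5 ^ i] (mod 2 ^ k)" using twopow_mod4_gen[OF k2] by blast
        have "[n * h * h = 5 ^ i * h] (mod 2 ^ k)" using cong_mult[OF i cong_refl] by simp
        moreover have "[n * h * h = n * 1] (mod 2 ^ k)"
          using cong_mult[OF cong_refl twopow_m1_sq[OF k]] by (simp add: h_def power2_eq_square mult.assoc)
        ultimately have "[n = 5 ^ i * h] (mod 2 ^ k)" by (metis cong_sym cong_trans mult_1_right)
        hence "[n = ?G 0 ^ i * ?G 1 ^ 1] (mod 2 ^ k)" by (simp add: h_def)
        thus ?thesis by blast
      qed
    qed
  qed
  show ?thesis unfolding True
    apply (rule exI[of _ ?G], rule exI[of _ ?E])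
    using A B C by blast
qed



definition gens_ok :: "nat \<Rightarrow> nat \<Rightarrow> (nat \<Rightarrow> nat) \<Rightarrow> (nat \<Rightarrow> nat) \<Rightarrow> bool" where
  "gens_ok p q g e \<longleftrightarrow> (\<forall>j\<in>{0::nat,1}. e j > (0::nat) \<and> [g j ^ e j = 1] (mod q)) \<and> e 0 * e 1 \<le> q \<and>
     (\<forall>n. coprime n p \<longrightarrow> (\<exists>x0 x1. [n = g 0 ^ x0 * g (1::nat) ^ x1] (mod q)))"

lemma char_count_bound:
  fixes d m :: nat
  assumes m: "m \<ge> 1" and d: "d \<ge> 1"
  defines "X \<equiv> {chi. dirichlet_char m chi \<and> (\<forall>n. coprime n m \<longrightarrow> chi n ^ d = 1)}"
  shows "finite X \<and> card X \<le> d ^ (2 * card (prime_factors m)) \<and> card X \<le> m"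
proof -
  define P where "P = prime_factors m"
  define q where "q p = p ^ multiplicity p m" for p
  have finP: "finite P" by (simp add: P_def)
  have Pprime: "prime p" if "p \<in> P" for p using that unfolding P_def in_prime_factors_iff by blast
  have Pk: "multiplicity p m > 0" if "p \<in> P" for p using that unfolding P_def prime_factors_multiplicity by blast
  have Pdvd: "p dvd m" if "p \<in> P" for p using that unfolding P_def in_prime_factors_iff by blast
  have qcop: "coprime (q p) (q p')" if "p \<in> P" "p' \<in> P" "p \<noteq> p'" for p p'
    using primes_coprime[OF Pprime[OF that(1)] Pprime[OF that(2)] that(3)] by (simp add: q_def)
  have m_eq: "m = (\<Prod>p\<in>P. q p)" unfolding P_def q_def by (rule prime_factorization_nat) (use m in simp)
  have cong_m: "[x = y] (mod m)" if "\<And>p. p \<in> P \<Longrightarrow> [x = y] (mod q p)" for x y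
  proof (unfold m_eq, rule coprime_cong_prod_nat)
    fix i j assume "i \<in> P" "j \<in> P" "i \<noteq> j" thus "coprime (q i) (q j)" by (rule qcop)
  next
    fix i assume "i \<in> P" thus "[x = y] (mod q i)" by (rule that)
  qed
  have "\<forall>p\<in>P. \<exists>g e. gens_ok p (q p) g e"
  proof
    fix p assume p: "p \<in> P"
    show "\<exists>g e. gens_ok p (q p) g e"
      unfolding q_def gens_ok_def by (rule local_gens[OF Pprime[OF p] Pk[OF p]])
  qed
  then obtain G where "\<forall>p\<in>P. \<exists>e. gens_ok p (q p) (G p) e"
    by (rule bchoice[THEN exE])
  then obtain E where GE0: "\<forall>p\<in>P. gens_ok p (q p) (G p) (E p)"
    by (rule bchoice[THEN exE])
  have GE: "gens_ok p (q p) (G p) (E p)" if "p \<in> P" for p using GE0 that by blast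
  have GEpos: "E p j > 0" if "p \<in> P" "j \<in> {0,1}" for p j
    using GE[OF that(1)] that(2) unfolding gens_ok_def by blast
  have GEcong: "[G p j ^ E p j = 1] (mod q p)" if "p \<in> P" "j \<in> {0,1}" for p j
    using GE[OF that(1)] that(2) unfolding gens_ok_def by blast
  have GEle: "E p 0 * E p 1 \<le> q p" if "p \<in> P" for p
    using GE[OF that(1)] unfolding gens_ok_def by blast
  have GEgen: "\<exists>x0 x1. [n = G p 0 ^ x0 * G p 1 ^ x1] (mod q p)" if "p \<in> P" "coprime n p" for p n
    using GE[OF that(1)] that(2) unfolding gens_ok_def by blast
  define I where "I = P \<times> {0::nat, 1}"
  have finI: "finite I" using finP by (simp add: I_def)
  have "\<forall>i\<in>I. \<exists>x. \<forall>p\<in>P. [x = (if p = fst i then G (fst i) (snd i) else 1)] (mod q p)"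
  proof
    fix i assume "i \<in> I"
    show "\<exists>x. \<forall>p\<in>P. [x = (if p = fst i then G (fst i) (snd i) else 1)] (mod q p)"
    proof (rule chinese_remainder_nat[OF finP])
      show "\<forall>i\<in>P. \<forall>j\<in>P. i \<noteq> j \<longrightarrow> coprime (q i) (q j)" using qcop by blast
    qed
  qed
  then obtain bb where bb0: "\<forall>i\<in>I. \<forall>p\<in>P. [bb i = (if p = fst i then G (fst i) (snd i) else 1)] (mod q p)"
    by (rule bchoice[THEN exE])
  have bb: "\<And>i p. i \<in> I \<Longrightarrow> p \<in> P \<Longrightarrow> [bb i = (if p = fst i then G (fst i) (snd i) else 1)] (mod q p)"
    using bb0 by blast
  define e' where "e' i = E (fst i) (snd i)" for i
  have memI: "fst i \<in> P" "snd i \<in> {0,1}" if "i \<in> I" for i using that by (auto simp: I_def)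
  have e'pos: "e' i > 0" if "i \<in> I" for i
    using GEpos[OF memI(1)[OF that] memI(2)[OF that]] unfolding e'_def by simp
  have be: "[bb i ^ e' i = 1] (mod m)" if i: "i \<in> I" for i
  proof (rule cong_m)
    fix p assume p: "p \<in> P"
    show "[bb i ^ e' i = 1] (mod q p)"
    proof (cases "p = fst i")
      case True
      have "[bb i ^ e' i = G (fst i) (snd i) ^ e' i] (mod q p)"
        using bb[OF i p] True by (intro cong_pow) simp
      also have "[G (fst i) (snd i) ^ e' i = 1] (mod q p)"
        using GEcong[OF memI(1)[OF i] memI(2)[OF i]] True unfolding e'_def by simp
      finally show ?thesis .
    next
      case False
      have "[bb i ^ e' i = 1 ^ e' i] (mod q p)"
        using bb[OF i p] False by (intro cong_pow) simp
      thus ?thesis by simp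
    qed
  qed
  have gen: "\<exists>x. [n = (\<Prod>i\<in>I. bb i ^ x i)] (mod m)" if cn: "coprime n m" for n
  proof -
    have "\<forall>p\<in>P. \<exists>x0 x1. [n = G p 0 ^ x0 * G p 1 ^ x1] (mod q p)"
    proof
      fix p assume p: "p \<in> P"
      have "coprime n p" by (rule coprime_divisors[OF dvd_refl Pdvd[OF p] cn])
      thus "\<exists>x0 x1. [n = G p 0 ^ x0 * G p 1 ^ x1] (mod q p)" using GEgen[OF p] by blast
    qed
    then obtain X0 where "\<forall>p\<in>P. \<exists>x1. [n = G p 0 ^ X0 p * G p 1 ^ x1] (mod q p)"
      by (rule bchoice[THEN exE])
    then obtain X1 where X0: "\<forall>p\<in>P. [n = G p 0 ^ X0 p * G p 1 ^ X1 p] (mod q p)"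
      by (rule bchoice[THEN exE])
    have X: "\<And>p. p \<in> P \<Longrightarrow> [n = G p 0 ^ X0 p * G p 1 ^ X1 p] (mod q p)" using X0 by blast
    define x where "x i = (if snd i = (0::nat) then X0 (fst i) else X1 (fst i))" for i :: "nat \<times> nat"
    have "[n = (\<Prod>i\<in>I. bb i ^ x i)] (mod m)"
    proof (rule cong_m)
      fix p assume p: "p \<in> P"
      define h where "h i = (if fst i = p then G p (snd i) else 1) ^ x i" for i
      have "[(\<Prod>i\<in>I. bb i ^ x i) = (\<Prod>i\<in>I. h i)] (mod q p)"
      proof (rule cong_prod)
        fix i assume i: "i \<in> I"
        show "[bb i ^ x i = h i] (mod q p)"
          unfolding h_def by (rule cong_pow) (use bb[OF i p] in auto)
      qed
      also have "(\<Prod>i\<in>I. h i) = (\<Prod>i\<in>{(p,0),(p,1)}. h i)"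
        by (rule prod.mono_neutral_right) (use finI p in \<open>auto simp: I_def h_def\<close>)
      also have "\<dots> = G p 0 ^ X0 p * G p 1 ^ X1 p" by (simp add: h_def x_def)
      finally have "[(\<Prod>i\<in>I. bb i ^ x i) = G p 0 ^ X0 p * G p 1 ^ X1 p] (mod q p)" .
      thus "[n = (\<Prod>i\<in>I. bb i ^ x i)] (mod q p)" using X[OF p] cong_sym cong_trans by blast
    qed
    thus ?thesis by blast
  qed
  have cnt: "finite X \<and> card X \<le> (\<Prod>i\<in>I. min d (e' i))"
    unfolding X_def by (rule char_count_generic[OF finI _ e'pos be gen]) (use d in auto)
  have "(\<Prod>i\<in>I. min d (e' i)) \<le> (\<Prod>i\<in>I. e' i)" by (rule prod_mono) auto
  also have "(\<Prod>i\<in>I. e' i) = (\<Prod>p\<in>P. \<Prod>j\<in>{0::nat,1}. E p j)"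
    unfolding I_def e'_def prod.cartesian_product by (rule prod.cong) auto
  also have "\<dots> = (\<Prod>p\<in>P. E p 0 * E p 1)" by simp
  also have "\<dots> \<le> (\<Prod>p\<in>P. q p)"
  proof (rule prod_mono)
    fix p assume "p \<in> P" thus "0 \<le> E p 0 * E p 1 \<and> E p 0 * E p 1 \<le> q p" using GEle by blast
  qed
  also have "\<dots> = m" using m_eq by simp
  finally have b1: "(\<Prod>i\<in>I. min d (e' i)) \<le> m" .
  have "(\<Prod>i\<in>I. min d (e' i)) \<le> (\<Prod>i\<in>I. d)" by (rule prod_mono) auto
  also have "\<dots> = d ^ card I" by simp
  also have "card I = 2 * card (prime_factors m)" by (simp add: I_def P_def card_cartesian_product)
  finally have b2: "(\<Prod>i\<in>I. min d (e' i)) \<le> d ^ (2 * card (prime_factors m))" .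
  show ?thesis using cnt b1 b2 by auto
qed

lemma F_bound:
  assumes "m \<ge> 1" "d \<ge> 1"
  shows "F d m \<le> d ^ (2 * card (prime_factors m)) \<and> F d m \<le> m"
proof -
  define X where "X = {chi. dirichlet_char m chi \<and> (\<forall>n. coprime n m \<longrightarrow> chi n ^ d = 1)}"
  have X: "finite X \<and> card X \<le> d ^ (2 * card (prime_factors m)) \<and> card X \<le> m"
    unfolding X_def by (rule char_count_bound[OF assms])
  have "F d m \<le> card X" unfolding F_def
    by (rule card_mono) (use X in \<open>auto simp: X_def char_order_is_def\<close>)
  thus ?thesis using X by linarith
qed

lemma F_pos_imp:
  assumes "F d m > 0"
  shows "d \<le> totient m"
proof -
  obtain chi where chi: "dirichlet_char m chi" "char_order_is m chi d"
  proof -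
    have "{chi. dirichlet_char m chi \<and> primitive_char m chi \<and> char_order_is m chi d \<and> even_char m chi} \<noteq> {}"
      using assms unfolding F_def by (intro notI) simp
    thus ?thesis using that by blast
  qed
  have m: "m \<ge> 1" using chi(1) by (rule dc_m)
  have t: "totient m > 0" using m by simp
  have "\<forall>n. coprime n m \<longrightarrow> chi n ^ totient m = 1"
  proof (intro allI impI)
    fix n assume "coprime n m"
    hence "[n ^ totient m = 1] (mod m)" by (rule euler_theorem)
    hence "chi (n ^ totient m) = chi 1" by (rule dc_cong[OF chi(1)])
    thus "chi n ^ totient m = 1" using dc_power[OF chi(1)] dc_one[OF chi(1)] by simp
  qed
  thus ?thesis using chi(2) t unfolding char_order_is_def by (meson not_le)
qed



lemma prod_pf_le:
  fixes m :: nat assumes m: "m \<ge> 1"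
  shows "(\<Prod>p\<in>prime_factors m. p) \<le> m"
proof -
  have "(\<Prod>p\<in>prime_factors m. p) \<le> (\<Prod>p\<in>prime_factors m. p ^ multiplicity p m)"
  proof (rule prod_mono)
    fix p assume p: "p \<in> prime_factors m"
    have "multiplicity p m > 0" using p unfolding prime_factors_multiplicity by blast
    moreover have "p > 0" using p unfolding in_prime_factors_iff using prime_gt_0_nat by blast
    ultimately show "0 \<le> p \<and> p \<le> p ^ multiplicity p m"
      by (simp add: self_le_power)
  qed
  also have "\<dots> = m" using prime_factorization_nat[of m] m by simp
  finally show ?thesis .
qed

lemma sum_ln_pf_le:
  fixes m :: nat assumes m: "m \<ge> 1"
  shows "(\<Sum>p\<in>prime_factors m. ln (real p)) \<le> ln (real m)"
proof -
  have pos: "\<And>p. p \<in> prime_factors m \<Longrightarrow> real p \<noteq> 0"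
    unfolding in_prime_factors_iff using prime_gt_0_nat by fastforce
  have "(\<Sum>p\<in>prime_factors m. ln (real p)) = ln (\<Prod>p\<in>prime_factors m. real p)"
    by (rule ln_prod[symmetric]) (use pos in auto)
  also have "(\<Prod>p\<in>prime_factors m. real p) = real (\<Prod>p\<in>prime_factors m. p)" by simp
  also have "ln \<dots> \<le> ln (real m)"
  proof (subst ln_le_cancel_iff)
    have "(\<Prod>p\<in>prime_factors m. p) > 0"
      by (rule prod_pos) (simp add: in_prime_factors_iff prime_gt_0_nat)
    thus "0 < real (\<Prod>p\<in>prime_factors m. p)" by (simp only: of_nat_0_less_iff)
    show "0 < real m" using m by simp
    show "real (\<Prod>p\<in>prime_factors m. p) \<le> real m" by (simp only: of_nat_le_iff) (rule prod_pf_le[OF m])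
  qed
  finally show ?thesis .
qed

lemma omega_log_bound:
  fixes a \<epsilon> :: real assumes a: "a \<ge> 0" and e: "\<epsilon> > 0"
  shows "\<exists>C. \<forall>m::nat. m \<ge> 1 \<longrightarrow> a * real (card (prime_factors m)) \<le> C + \<epsilon> * ln (real m)"
proof -
  define K where "K = exp (a / \<epsilon>)"
  define C where "C = a * (K + 1)"
  have "a * real (card (prime_factors m)) \<le> C + \<epsilon> * ln (real m)" if m: "m \<ge> 1" for m :: nat
  proof -
    define P where "P = prime_factors m"
    define Q where "Q = {p\<in>P. real p < K}"
    have finP: "finite P" by (simp add: P_def)
    have Pge1: "real p \<ge> 1" if "p \<in> P" for p
      using that unfolding P_def in_prime_factors_iff using prime_ge_1_nat by fastforce
    have "a * real (card P) = (\<Sum>p\<in>P. a)" by simp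
    also have "\<dots> \<le> (\<Sum>p\<in>P. (if real p < K then a else 0) + \<epsilon> * ln (real p))"
    proof (rule sum_mono)
      fix p assume p: "p \<in> P"
      show "a \<le> (if real p < K then a else 0) + \<epsilon> * ln (real p)"
      proof (cases "real p < K")
        case True
        have "0 \<le> ln (real p)" using Pge1[OF p] by simp
        thus ?thesis using True e by simp
      next
        case False
        hence "ln K \<le> ln (real p)" using K_def Pge1[OF p] by (subst ln_le_cancel_iff) auto
        hence "a / \<epsilon> \<le> ln (real p)" by (simp add: K_def)
        hence "a \<le> \<epsilon> * ln (real p)" using e by (simp add: field_simps)
        thus ?thesis using False by simp
      qed
    qed
    also have "\<dots> = (\<Sum>p\<in>P. (if real p < K then a else 0)) + \<epsilon> * (\<Sum>p\<in>P. ln (real p))"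
      by (simp add: sum.distrib sum_distrib_left)
    also have "(\<Sum>p\<in>P. (if real p < K then a else 0)) = a * real (card Q)"
    proof -
      have "P \<inter> {p. real p < K} = Q" by (auto simp: Q_def)
      thus ?thesis using finP by (simp add: sum.If_cases)
    qed
    also have "real (card Q) \<le> K + 1"
    proof -
      have "Q \<subseteq> {..<nat \<lceil>K\<rceil>}"
      proof
        fix p assume "p \<in> Q"
        hence "real p < K" by (simp add: Q_def)
        hence "real p < real (nat \<lceil>K\<rceil>)" by linarith
        thus "p \<in> {..<nat \<lceil>K\<rceil>}" by simp
      qed
      hence "card Q \<le> nat \<lceil>K\<rceil>" using card_mono[of "{..<nat \<lceil>K\<rceil>}" Q] by simp
      hence "real (card Q) \<le> real (nat \<lceil>K\<rceil>)" by linarith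
      also have "\<dots> \<le> K + 1" by (simp add: K_def)
      finally show ?thesis .
    qed
    hence "a * real (card Q) \<le> a * (K + 1)" using a by (simp add: mult_left_mono)
    also have "\<epsilon> * (\<Sum>p\<in>P. ln (real p)) \<le> \<epsilon> * ln (real m)"
      using sum_ln_pf_le[OF m] e by (simp add: P_def)
    ultimately show ?thesis by (simp add: C_def P_def)
  qed
  thus ?thesis by blast
qed

lemma totient_log_bound:
  fixes m :: nat assumes m: "m \<ge> 1"
  shows "ln (real m) \<le> real (card (prime_factors m)) * ln 2 + ln (real (totient m))"
proof -
  have "(\<Prod>p\<in>prime_factors m. (1::real) / 2) \<le> (\<Prod>p\<in>prime_factors m. 1 - 1 / real p)"
  proof (rule prod_mono)
    fix p assume "p \<in> prime_factors m"
    hence "p \<ge> 2" unfolding in_prime_factors_iff using prime_ge_2_nat by blast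
    hence "real p \<ge> 2" by simp
    hence "1 / real p \<le> 1 / 2" by (simp add: field_simps)
    thus "0 \<le> (1::real) / 2 \<and> 1 / 2 \<le> 1 - 1 / real p" by simp
  qed
  hence "real m * (1 / 2) ^ card (prime_factors m) \<le> real (totient m)"
    using totient_formula2[of m] m by (simp add: mult_left_mono)
  hence "real m \<le> 2 ^ card (prime_factors m) * real (totient m)"
    by (simp add: field_simps power_divide)
  hence "ln (real m) \<le> ln (2 ^ card (prime_factors m) * real (totient m))"
    using m by (subst ln_le_cancel_iff) auto
  also have "\<dots> = real (card (prime_factors m)) * ln 2 + ln (real (totient m))"
    using m by (simp add: ln_mult ln_realpow)
  finally show ?thesis .
qed

lemma lnln_bound:
  fixes a \<epsilon> :: real assumes e: "\<epsilon> > 0"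
  shows "\<exists>C. \<forall>m::nat. m \<ge> 2 \<longrightarrow> a * ln (ln (real m)) \<le> C + \<epsilon> * ln (real m)"
proof (cases "a > 0")
  case True
  define s where "s = \<epsilon> / a"
  have s: "s > 0" using True e by (simp add: s_def)
  have "a * ln (ln (real m)) \<le> - a * (1 + ln s) + \<epsilon> * ln (real m)" if m: "m \<ge> 2" for m :: nat
  proof -
    define y where "y = ln (real m)"
    have y: "y > 0" using m by (simp add: y_def)
    have "ln (s * y) \<le> s * y - 1" using s y by (intro ln_le_minus_one) simp
    hence "ln y \<le> s * y - 1 - ln s" using s y by (simp add: ln_mult)
    hence "a * ln y \<le> a * (s * y - 1 - ln s)" using True by (simp add: mult_left_mono)
    also have "a * (s * y - 1 - ln s) = - a * (1 + ln s) + \<epsilon> * y"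
      using True by (simp add: s_def field_simps)
    finally show ?thesis by (simp add: y_def)
  qed
  thus ?thesis by blast
next
  case False
  have "a * ln (ln (real m)) \<le> a * ln (ln 2) + \<epsilon> * ln (real m)" if m: "m \<ge> 2" for m :: nat
  proof -
    have "ln 2 \<le> ln (real m)" using m by simp
    moreover have "0 < ln (real m)" using m by simp
    ultimately have "ln (ln 2) \<le> ln (ln (real m))" by (subst ln_le_cancel_iff) auto
    hence "a * ln (ln (real m)) \<le> a * ln (ln 2)" using False by (simp add: mult_left_mono_neg)
    moreover have "0 \<le> \<epsilon> * ln (real m)" using e m by simp
    ultimately show ?thesis by linarith
  qed
  thus ?thesis by blast
qed



lemma base_ln:
  fixes M t \<sigma> \<tau> :: real and d m :: nat
  assumes M: "M > 0" and d: "d \<ge> 1" and m: "m \<ge> 2"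
  defines "b \<equiv> (M * real d * real m powr \<sigma> * ln (real m) powr \<tau>) / (real (totient m) * ln (real m))"
  shows "b > 0 \<and> ln b = ln M + ln (real d) + \<sigma> * ln (real m) + (\<tau> - 1) * ln (ln (real m)) - ln (real (totient m))"
proof -
  have L: "ln (real m) > 0" using m by simp
  have ph: "real (totient m) > 0" using m by simp
  have dpos: "real d > 0" using d by simp
  have mp: "real m powr \<sigma> > 0" using m by simp
  have Lp: "ln (real m) powr \<tau> > 0" using L by simp
  have num: "M * real d * real m powr \<sigma> * ln (real m) powr \<tau> > 0" using M dpos mp Lp by simp
  have den: "real (totient m) * ln (real m) > 0" using ph L by simp
  have bpos: "b > 0" unfolding b_def using num den by (rule divide_pos_pos)
  have "ln b = ln (M * real d * real m powr \<sigma> * ln (real m) powr \<tau>) - ln (real (totient m) * ln (real m))"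
    unfolding b_def ln_div by (rule if_P) (use num den d m in auto)
  also have "ln (M * real d * real m powr \<sigma> * ln (real m) powr \<tau>) = ln M + ln (real d) + \<sigma> * ln (real m) + \<tau> * ln (ln (real m))"
    using M dpos mp Lp m by (simp add: ln_mult)
  also have "ln (real (totient m) * ln (real m)) = ln (real (totient m)) + ln (ln (real m))"
    using ph L by (simp add: ln_mult)
  finally show ?thesis using bpos by (simp add: algebra_simps)
qed

lemma term_le_exp:
  fixes M t \<sigma> \<tau> Z :: real and d m :: nat
  assumes M: "M > 0" and d: "d \<ge> 1" and m: "m \<ge> 2" and F: "F d m > 0"
    and ineq: "ln (real (F d m)) + t * (ln M + ln (real d) + \<sigma> * ln (real m) + (\<tau> - 1) * ln (ln (real m)) - ln (real (totient m))) \<le> Z"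
  shows "real (F d m) * ((M * real d * real m powr \<sigma> * ln (real m) powr \<tau>) / (real (totient m) * ln (real m))) powr t \<le> exp Z"
proof -
  define b where "b = (M * real d * real m powr \<sigma> * ln (real m) powr \<tau>) / (real (totient m) * ln (real m))"
  have bl: "b > 0 \<and> ln b = ln M + ln (real d) + \<sigma> * ln (real m) + (\<tau> - 1) * ln (ln (real m)) - ln (real (totient m))"
    unfolding b_def by (rule base_ln[OF M d m])
  have Fp: "real (F d m) > 0" using F by simp
  have "real (F d m) * b powr t = exp (ln (real (F d m)) + t * ln b)"
    using bl Fp by (simp add: powr_def exp_add mult.commute)
  also have "\<dots> \<le> exp Z" using ineq bl by simp
  finally show ?thesis by (simp add: b_def)
qed

lemma term_nonneg:
  fixes M t \<sigma> \<tau> :: real and d m :: nat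
  shows "0 \<le> real (F d m) * ((M * real d * real m powr \<sigma> * ln (real m) powr \<tau>) / (real (totient m) * ln (real m))) powr t"
  by simp

lemma large_term:
  fixes M t \<sigma> \<tau> c B C2 :: real and d m :: nat
  assumes M: "M > 0" and c: "c > 0" and B: "B \<ge> 0" and d: "d \<ge> 3" and m: "m \<ge> 2"
    and t: "t \<ge> c * ln (real d)" and ts: "t * \<sigma> \<le> B" and tau: "\<tau> \<le> 1/2"
    and ld1: "ln (real d) \<ge> 1" and ld2: "c * ln (real d) \<ge> 8 * (B + 5)"
    and ld3: "ln M - ln (ln (real d)) / 2 \<le> - ((4 * B + 14) / c)"
    and phi: "ln (real (totient m)) \<ge> ln (real m) / 2 - C2"
    and ld4: "ln (real d) \<ge> 2 * (ln M + C2)"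
    and F1: "F d m > 0" and F2: "F d m \<le> m" and dphi: "d \<le> totient m"
  shows "real (F d m) * ((M * real d * real m powr \<sigma> * ln (real m) powr \<tau>) / (real (totient m) * ln (real m))) powr t
          \<le> 1 / (real d ^ 2 * real m ^ 2)"
proof -
  define lf where "lf = ln (real (F d m))"
  define ld where "ld = ln (real d)"
  define lm where "lm = ln (real m)"
  define lp where "lp = ln (real (totient m))"
  define lL where "lL = ln (ln (real m))"
  define K where "K = (4 * B + 14) / c"
  have tot: "totient m > 0" using m by simp
  have f1: "lf \<le> lm" unfolding lf_def lm_def using F1 F2 by (subst ln_le_cancel_iff) auto
  have f2: "ld \<le> lp" unfolding ld_def lp_def using dphi d m by (subst ln_le_cancel_iff) auto
  have dm: "d \<le> m" using dphi totient_le[of m] by linarith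
  have f2': "ld \<le> lm" unfolding ld_def lm_def using dm d by (subst ln_le_cancel_iff) auto
  have ldpos: "ld \<ge> 1" using ld1 by (simp add: ld_def)
  have lmpos: "lm \<ge> 1" using f2' ldpos by linarith
  have tpos: "t \<ge> c * ld" using t by (simp add: ld_def)
  have cld: "c * ld > 0" using c ldpos by simp
  have f3: "(t * \<sigma>) * lm \<le> B * lm" using ts lmpos by (simp add: mult_right_mono)
  have lL0: "ln ld \<le> lL"
  proof -
    have "ld \<le> ln (real m)" using f2' by (simp add: lm_def)
    thus ?thesis unfolding lL_def using ldpos by (subst ln_le_cancel_iff) auto
  qed
  have lnld0: "ln ld \<ge> 0" using ldpos by simp
  have f5: "t * ((\<tau> - 1) * lL) \<le> - (t / 2) * ln ld"
  proof -
    have "(\<tau> - 1) * lL \<le> (- 1 / 2) * lL" using tau lL0 lnld0 by (intro mult_right_mono) auto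
    also have "\<dots> \<le> (- 1 / 2) * ln ld" using lL0 by simp
    finally have "(\<tau> - 1) * lL \<le> - (1/2) * ln ld" by simp
    hence "t * ((\<tau> - 1) * lL) \<le> t * (- (1/2) * ln ld)" using tpos cld by (intro mult_left_mono) auto
    thus ?thesis by simp
  qed
  have expand: "lf + t * (ln M + ld + \<sigma> * lm + (\<tau> - 1) * lL - lp) =
      lf + t * (ln M + ld - lp) + (t * \<sigma>) * lm + t * ((\<tau> - 1) * lL)"
    by (simp add: algebra_simps)
  have main: "lf + t * (ln M + ld + \<sigma> * lm + (\<tau> - 1) * lL - lp) \<le> -2 * ld - 2 * lm"
  proof (cases "lm \<le> 4 * ld")
    case True
    have "t * (ln M + ld - lp) \<le> t * ln M" using f2 tpos cld by (simp add: mult_left_mono)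
    hence "t * (ln M + ld - lp) + t * ((\<tau> - 1) * lL) \<le> t * (ln M - ln ld / 2)"
      using f5 by (simp add: algebra_simps)
    also have "t * (ln M - ln ld / 2) \<le> t * (- K)" using ld3 tpos cld
      by (intro mult_left_mono) (auto simp: K_def ld_def)
    also have "t * (- K) \<le> (c * ld) * (- K)"
    proof -
      have "K \<ge> 0" using B c by (simp add: K_def)
      thus ?thesis using tpos by (simp add: mult_right_mono)
    qed
    also have "(c * ld) * (- K) = - (4 * B + 14) * ld" using c by (simp add: K_def field_simps)
    finally have A: "t * (ln M + ld - lp) + t * ((\<tau> - 1) * lL) \<le> - (4 * B + 14) * ld" .
    have "B * lm \<le> B * (4 * ld)" using True B by (simp add: mult_left_mono)
    moreover have "B * (4 * ld) = 4 * (B * ld)" by simp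
    moreover have "- (4 * B + 14) * ld = - 4 * (B * ld) - 14 * ld" by (simp add: algebra_simps)
    ultimately show ?thesis using expand A f1 f3 True by linarith
  next
    case False
    have "ln M + ld - lp \<le> - lm / 8"
      using phi ld4 False by (simp add: lp_def lm_def ld_def)
    moreover have t0: "t \<ge> 0" using tpos cld by linarith
    ultimately have "t * (ln M + ld - lp) \<le> t * (- lm / 8)" by (rule mult_left_mono)
    also have "t * (- lm / 8) \<le> (8 * (B + 5)) * (- lm / 8)"
      using tpos ld2 lmpos by (intro mult_right_mono_neg) (auto simp: ld_def)
    finally have A0: "t * (ln M + ld - lp) \<le> (8 * (B + 5)) * (- lm / 8)" .
    have "(8 * (B + 5)) * (- lm / 8) = - (B + 5) * lm" by (simp add: algebra_simps)
    with A0 have A: "t * (ln M + ld - lp) \<le> - (B + 5) * lm" by simp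
    have "(t / 2) * ln ld \<ge> 0" using t0 lnld0 by simp
    hence "- (t / 2) * ln ld \<le> 0" by simp
    hence "t * ((\<tau> - 1) * lL) \<le> 0" using f5 by linarith
    moreover have "- (B + 5) * lm = - (B * lm) - 5 * lm" by (simp add: algebra_simps)
    ultimately show ?thesis using expand A f1 f3 f2' by linarith
  qed
  have "real (F d m) * ((M * real d * real m powr \<sigma> * ln (real m) powr \<tau>) / (real (totient m) * ln (real m))) powr t
          \<le> exp (-2 * ld - 2 * lm)"
    by (rule term_le_exp[OF M _ m F1]) (use d main in \<open>simp_all add: lf_def ld_def lm_def lp_def lL_def\<close>)
  also have "exp (-2 * ld - 2 * lm) = 1 / (real d ^ 2 * real m ^ 2)"
  proof -
    have e: "-2 * ld - 2 * lm = - (ld + ld + (lm + lm))" by simp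
    have "exp (-2 * ld - 2 * lm) = inverse (exp ld ^ 2 * exp lm ^ 2)"
      unfolding e exp_minus exp_add by (simp only: power2_eq_square mult.assoc)
    also have "exp ld = real d" using d by (simp add: ld_def)
    also have "exp lm = real m" using m by (simp add: lm_def)
    finally show ?thesis by (simp add: divide_inverse)
  qed
  finally show ?thesis .
qed



lemma small_term:
  fixes M t \<sigma> \<tau> :: real and d :: nat
  assumes M: "M > 0" and d: "d \<ge> 1" and t: "t > 0" and ts: "t * (1 - \<sigma>) > 1"
    and Fb: "\<And>m. m \<ge> 2 \<Longrightarrow> real (F d m) \<le> real d ^ (2 * card (prime_factors m))"
  shows "\<exists>K \<delta>. K \<ge> 0 \<and> \<delta> > 0 \<and> (\<forall>m. m \<ge> 2 \<longrightarrow>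
     real (F d m) * ((M * real d * real m powr \<sigma> * ln (real m) powr \<tau>) / (real (totient m) * ln (real m))) powr t
       \<le> K * real m powr (- (1 + \<delta>)))"
proof -
  define \<epsilon> where "\<epsilon> = (t * (1 - \<sigma>) - 1) / 3"
  have e: "\<epsilon> > 0" using ts by (simp add: \<epsilon>_def)
  have ld0: "ln (real d) \<ge> 0" using d by simp
  have a0: "2 * ln (real d) + t * ln 2 \<ge> 0" using ld0 t by simp
  obtain C1 where C1: "\<And>m::nat. m \<ge> 1 \<Longrightarrow> (2 * ln (real d) + t * ln 2) * real (card (prime_factors m)) \<le> C1 + \<epsilon> * ln (real m)"
    using omega_log_bound[OF a0 e] by blast
  obtain C3 where C3: "\<And>m::nat. m \<ge> 2 \<Longrightarrow> (t * (\<tau> - 1)) * ln (ln (real m)) \<le> C3 + \<epsilon> * ln (real m)"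
    using lnln_bound[OF e] by blast
  define Z0 where "Z0 = t * (ln M + ln (real d)) + C1 + C3"
  define K where "K = exp Z0"
  have bound: "real (F d m) * ((M * real d * real m powr \<sigma> * ln (real m) powr \<tau>) / (real (totient m) * ln (real m))) powr t
       \<le> K * real m powr (- (1 + \<epsilon>))" if m: "m \<ge> 2" for m :: nat
  proof (cases "F d m = 0")
    case True
    thus ?thesis by (simp add: K_def)
  next
    case False
    hence Fp: "F d m > 0" by simp
    define lf where "lf = ln (real (F d m))"
    define ld where "ld = ln (real d)"
    define lm where "lm = ln (real m)"
    define lp where "lp = ln (real (totient m))"
    define lL where "lL = ln (ln (real m))"
    define w where "w = real (card (prime_factors m))"
    have h1: "lf \<le> 2 * (w * ld)"
    proof -
      have "ln (real (F d m)) \<le> ln (real d ^ (2 * card (prime_factors m)))"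
        using Fb[OF m] Fp d by (subst ln_le_cancel_iff) auto
      also have "\<dots> = 2 * (w * ld)" using d by (simp add: ln_realpow w_def ld_def)
      finally show ?thesis by (simp add: lf_def)
    qed
    have h2: "lm \<le> w * ln 2 + lp" using totient_log_bound[of m] m by (simp add: lm_def w_def lp_def)
    have h2': "t * lm \<le> t * (w * ln 2) + t * lp"
    proof -
      have "t * lm \<le> t * (w * ln 2 + lp)" using h2 t by (simp add: mult_left_mono)
      thus ?thesis by (simp add: algebra_simps)
    qed
    have h3: "2 * (w * ld) + t * (w * ln 2) \<le> C1 + \<epsilon> * lm"
    proof -
      have "(2 * ln (real d) + t * ln 2) * w \<le> C1 + \<epsilon> * lm" using C1[of m] m by (simp add: w_def lm_def)
      moreover have "(2 * ln (real d) + t * ln 2) * w = 2 * (w * ld) + t * (w * ln 2)" by (simp add: ld_def algebra_simps)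
      ultimately show ?thesis by simp
    qed
    have h4: "(t * (\<tau> - 1)) * lL \<le> C3 + \<epsilon> * lm" using C3[OF m] by (simp add: lL_def lm_def)
    have E: "lf + t * (ln M + ld + \<sigma> * lm + (\<tau> - 1) * lL - lp) =
        lf + t * (ln M + ld) + (t * \<sigma>) * lm + (t * (\<tau> - 1)) * lL - t * lp" by (simp add: algebra_simps)
    have E2: "(t * \<sigma>) * lm = t * lm - lm - 3 * (\<epsilon> * lm)"
    proof -
      have "3 * \<epsilon> = t * (1 - \<sigma>) - 1" by (simp add: \<epsilon>_def)
      hence ts': "t * \<sigma> = t - 1 - 3 * \<epsilon>" by (simp add: algebra_simps)
      have "(t * \<sigma>) * lm = (t - 1 - 3 * \<epsilon>) * lm" by (simp only: ts')
      also have "\<dots> = t * lm - lm - 3 * (\<epsilon> * lm)" by (simp add: algebra_simps)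
      finally show ?thesis .
    qed
    have main: "lf + t * (ln M + ld + \<sigma> * lm + (\<tau> - 1) * lL - lp) \<le> Z0 - lm - \<epsilon> * lm"
      unfolding Z0_def ld_def[symmetric] using E E2 h1 h2' h3 h4 by linarith
    have "real (F d m) * ((M * real d * real m powr \<sigma> * ln (real m) powr \<tau>) / (real (totient m) * ln (real m))) powr t
       \<le> exp (Z0 - lm - \<epsilon> * lm)"
      by (rule term_le_exp[OF M d m Fp]) (use main in \<open>simp add: lf_def ld_def lm_def lp_def lL_def\<close>)
    also have "exp (Z0 - lm - \<epsilon> * lm) = K * real m powr (- (1 + \<epsilon>))"
    proof -
      have "Z0 - lm - \<epsilon> * lm = Z0 + (- (1 + \<epsilon>)) * ln (real m)" by (simp add: lm_def algebra_simps)
      hence "exp (Z0 - lm - \<epsilon> * lm) = exp Z0 * exp ((- (1 + \<epsilon>)) * ln (real m))"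
        by (simp only: exp_add)
      thus ?thesis using m by (simp add: K_def powr_def)
    qed
    finally show ?thesis .
  qed
  show ?thesis
    by (rule exI[of _ K], rule exI[of _ \<epsilon>]) (use bound e in \<open>simp add: K_def\<close>)
qed

lemma powr_summable_on:
  fixes K \<delta> :: real and A :: "nat set"
  assumes "K \<ge> 0" "\<delta> > 0"
  shows "(\<lambda>m. K * real m powr (- (1 + \<delta>))) summable_on A"
proof -
  have "summable (\<lambda>m. real m powr (- (1 + \<delta>)))" using assms by (subst summable_real_powr_iff) simp
  hence "summable (\<lambda>m. K * real m powr (- (1 + \<delta>)))" by (rule summable_mult)
  hence "(\<lambda>m. K * real m powr (- (1 + \<delta>))) summable_on UNIV"
    using assms by (subst summable_on_UNIV_nonneg_real_iff) auto
  thus ?thesis by (rule summable_on_subset) simp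
qed

lemma inv_sq_summable_on: "(\<lambda>n::nat. inverse (real n ^ 2)) summable_on UNIV"
proof -
  have "summable (\<lambda>n::nat. inverse (real n ^ 2))" by (rule inverse_power_summable) simp
  thus ?thesis by (subst summable_on_UNIV_nonneg_real_iff) auto
qed

lemma prod_inv_sq_summable_on:
  "(\<lambda>(d::nat, m::nat). inverse (real d ^ 2) * inverse (real m ^ 2)) summable_on A"
proof -
  define h where "h n = inverse (real n ^ 2)" for n :: nat
  define S where "S = infsum h UNIV"
  have hs: "(h has_sum S) UNIV" unfolding S_def h_def using inv_sq_summable_on by (simp add: summable_iff_has_sum_infsum)
  have "(\<lambda>(d, m). h d * h m) summable_on Sigma UNIV (\<lambda>_. UNIV)"
  proof (rule summable_on_SigmaI)
    fix x :: nat assume "x \<in> UNIV"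
    show "((\<lambda>y. case (x, y) of (d, m) \<Rightarrow> h d * h m) has_sum (h x * S)) UNIV"
      using has_sum_cmult_right[OF hs, of "h x"] by simp
  next
    show "(\<lambda>x. h x * S) summable_on UNIV"
      by (rule summable_on_cmult_left) (use inv_sq_summable_on in \<open>simp add: h_def\<close>)
  next
    fix x y :: nat
    show "0 \<le> (case (x, y) of (d, m) \<Rightarrow> h d * h m)" by (simp add: h_def)
  qed
  hence "(\<lambda>(d, m). h d * h m) summable_on UNIV" by simp
  hence "(\<lambda>(d, m). h d * h m) summable_on A" by (rule summable_on_subset) simp
  thus ?thesis by (simp add: h_def)
qed



theorem proposition11p7:
  fixes M :: real and t \<sigma> \<tau> :: "nat \<Rightarrow> real"
  assumes "M > 0"
    and "\<exists>c>0. \<forall>d\<ge>3. t d \<ge> c * ln (real d)"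
    and "bounded {t d * \<sigma> d | d. d \<ge> 3}"
    and "(\<tau> \<longlongrightarrow> 0) sequentially"
  shows "(\<lambda>(d, m). real (F d m) *
            ((M * real d * real m powr \<sigma> d * ln (real m) powr \<tau> d)
              / (real (totient m) * ln (real m))) powr t d)
         summable_on {(d, m). d \<ge> 3 \<and> t d * (1 - \<sigma> d) > 1 \<and> m \<ge> 2}"
proof -
  note M = assms(1)
  define T where "T = (\<lambda>(d, m). real (F d m) *
            ((M * real d * real m powr \<sigma> d * ln (real m) powr \<tau> d)
              / (real (totient m) * ln (real m))) powr t d)"
  have Tnn: "T x \<ge> 0" for x by (simp add: T_def case_prod_beta)
  obtain c where c: "c > 0" "\<And>d. d \<ge> 3 \<Longrightarrow> t d \<ge> c * ln (real d)" using assms(2) by blast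
  obtain B0 where B0: "\<forall>x\<in>{t d * \<sigma> d | d. d \<ge> 3}. norm x \<le> B0"
    using assms(3) unfolding bounded_iff by blast
  define B where "B = max B0 0"
  have B: "B \<ge> 0" by (simp add: B_def)
  have tsB: "t d * \<sigma> d \<le> B" if "d \<ge> 3" for d
  proof -
    have "norm (t d * \<sigma> d) \<le> B0" using B0 that by blast
    thus ?thesis unfolding B_def by auto
  qed
  have "eventually (\<lambda>d. \<tau> d < 1/2) sequentially" using order_tendstoD(2)[OF assms(4), of "1/2"] by simp
  then obtain N1 where N1: "\<And>d. d \<ge> N1 \<Longrightarrow> \<tau> d < 1/2" by (auto simp: eventually_sequentially)
  obtain C0 where C0: "\<And>m::nat. m \<ge> 1 \<Longrightarrow> ln 2 * real (card (prime_factors m)) \<le> C0 + 1/2 * ln (real m)"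
    using omega_log_bound[of "ln 2" "1/2"] by auto
  have phi: "ln (real (totient m)) \<ge> ln (real m) / 2 - C0" if "m \<ge> 1" for m :: nat
  proof -
    have "ln (real m) \<le> real (card (prime_factors m)) * ln 2 + ln (real (totient m))"
      by (rule totient_log_bound[OF that])
    moreover have "real (card (prime_factors m)) * ln 2 = ln 2 * real (card (prime_factors m))" by simp
    ultimately show ?thesis using C0[OF that] by linarith
  qed
  define K where "K = (4 * B + 14) / c"
  define X where "X = max (max 1 (8 * (B + 5) / c)) (max (exp (2 * (ln M + K))) (2 * (ln M + C0)))"
  define D0 where "D0 = N1 + 3 + nat \<lceil>exp X\<rceil>"
  have large_ok: "d \<ge> 3 \<and> \<tau> d \<le> 1/2 \<and> ln (real d) \<ge> 1 \<and> c * ln (real d) \<ge> 8 * (B + 5) \<and>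
      ln M - ln (ln (real d)) / 2 \<le> - ((4 * B + 14) / c) \<and> ln (real d) \<ge> 2 * (ln M + C0)"
    if d: "d \<ge> D0" for d
  proof -
    have d3: "d \<ge> 3" "d \<ge> N1" using d by (auto simp: D0_def)
    have "real d \<ge> real (nat \<lceil>exp X\<rceil>)" using d by (simp add: D0_def)
    moreover have "real (nat \<lceil>exp X\<rceil>) \<ge> exp X" by linarith
    ultimately have dX: "real d \<ge> exp X" by linarith
    hence ldX: "ln (real d) \<ge> X"
      by (metis exp_gt_zero ln_exp ln_le_cancel_iff order_less_le_trans)
    have l1: "ln (real d) \<ge> 1" using ldX by (simp add: X_def)
    have l2: "c * ln (real d) \<ge> 8 * (B + 5)"
    proof -
      have "8 * (B + 5) / c \<le> ln (real d)" using ldX by (simp add: X_def)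
      hence "8 * (B + 5) \<le> ln (real d) * c" using c(1) by (simp only: pos_divide_le_eq)
      thus ?thesis by (simp add: mult.commute)
    qed
    have l3: "ln M - ln (ln (real d)) / 2 \<le> - ((4 * B + 14) / c)"
    proof -
      have "exp (2 * (ln M + K)) \<le> ln (real d)" using ldX by (simp add: X_def)
      hence "ln (exp (2 * (ln M + K))) \<le> ln (ln (real d))"
        using l1 by (subst ln_le_cancel_iff) auto
      hence "2 * (ln M + K) \<le> ln (ln (real d))" by simp
      hence "2 * ln M + 2 * K \<le> ln (ln (real d))" by (simp add: algebra_simps)
      hence "ln M - ln (ln (real d)) / 2 \<le> - K" by (simp add: field_simps)
      thus ?thesis by (simp only: K_def)
    qed
    have l4: "ln (real d) \<ge> 2 * (ln M + C0)" using ldX by (simp add: X_def)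
    show ?thesis using d3 N1[OF d3(2)] l1 l2 l3 l4 by auto
  qed
  define S where "S = {(d::nat, m::nat). d \<ge> 3 \<and> t d * (1 - \<sigma> d) > 1 \<and> m \<ge> 2}"
  define A1 where "A1 = {d. 3 \<le> d \<and> d < D0 \<and> t d * (1 - \<sigma> d) > 1}"
  define S1 where "S1 = Sigma A1 (\<lambda>_. {m::nat. 2 \<le> m})"
  define S2 where "S2 = {(d::nat, m::nat). d \<ge> D0 \<and> d \<ge> 3 \<and> t d * (1 - \<sigma> d) > 1 \<and> m \<ge> 2}"
  have SU: "S = S1 \<union> S2" by (auto simp: S_def S1_def S2_def A1_def)
  have sum2: "T summable_on S2"
  proof (rule summable_on_comparison_test[OF prod_inv_sq_summable_on[of S2]])
    fix x assume x: "x \<in> S2"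
    show "0 \<le> T x" by (rule Tnn)
    obtain d m where dm: "x = (d, m)" by fastforce
    have d: "d \<ge> D0" "d \<ge> 3" and m: "m \<ge> 2" using x by (auto simp: S2_def dm)
    note ok = large_ok[OF d(1)]
    show "T x \<le> (case x of (d, m) \<Rightarrow> inverse (real d ^ 2) * inverse (real m ^ 2))"
    proof (cases "F d m = 0")
      case True
      thus ?thesis by (simp add: dm T_def)
    next
      case False
      hence F1: "F d m > 0" by simp
      have Fb: "F d m \<le> m" using F_bound[of m d] m d by simp
      have "T x \<le> 1 / (real d ^ 2 * real m ^ 2)"
        unfolding dm T_def case_prod_conv
        by (rule large_term[OF M c(1) B d(2) m c(2)[OF d(2)] tsB[OF d(2)] _ _ _ _ phi _ F1 Fb F_pos_imp[OF F1]])
           (use ok m in auto)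
      thus ?thesis by (simp add: dm divide_inverse)
    qed
  qed
  have sum1: "T summable_on S1"
    unfolding S1_def
  proof (rule summable_on_SigmaI)
    fix d assume d: "d \<in> A1"
    have d3: "d \<ge> 3" and tsd: "t d * (1 - \<sigma> d) > 1" using d by (auto simp: A1_def)
    have tpos: "t d > 0"
    proof -
      have "ln (real d) > 0" using d3 by simp
      hence "c * ln (real d) > 0" using c(1) by simp
      thus ?thesis using c(2)[OF d3] by linarith
    qed
    have Fb: "real (F d m) \<le> real d ^ (2 * card (prime_factors m))" if "m \<ge> 2" for m
    proof -
      have "F d m \<le> d ^ (2 * card (prime_factors m))" using F_bound[of m d] that d3 by simp
      hence "real (F d m) \<le> real (d ^ (2 * card (prime_factors m)))" by (simp only: of_nat_le_iff)
      thus ?thesis by simp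
    qed
    obtain K' \<delta> where K': "K' \<ge> 0" "\<delta> > 0" and bnd: "\<And>m. m \<ge> 2 \<Longrightarrow>
       real (F d m) * ((M * real d * real m powr \<sigma> d * ln (real m) powr \<tau> d) / (real (totient m) * ln (real m))) powr t d
       \<le> K' * real m powr (- (1 + \<delta>))"
      using small_term[OF M _ tpos tsd Fb, of "\<tau> d"] d3 by auto
    have "(\<lambda>m. T (d, m)) summable_on {m. 2 \<le> m}"
    proof (rule summable_on_comparison_test[OF powr_summable_on[OF K']])
      fix m :: nat assume "m \<in> {m. 2 \<le> m}"
      hence m: "m \<ge> 2" by simp
      show "T (d, m) \<le> K' * real m powr - (1 + \<delta>)" using bnd[OF m] by (simp add: T_def)
      show "0 \<le> T (d, m)" by (rule Tnn)
    qed
    thus "((\<lambda>m. T (d, m)) has_sum infsum (\<lambda>m. T (d, m)) {m. 2 \<le> m}) {m. 2 \<le> m}"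
      by (simp add: summable_iff_has_sum_infsum)
  next
    have "finite A1" by (rule finite_subset[of _ "{..<D0}"]) (auto simp: A1_def)
    thus "(\<lambda>d. infsum (\<lambda>m. T (d, m)) {m. 2 \<le> m}) summable_on A1" by simp
  next
    fix d m :: nat show "0 \<le> T (d, m)" by (rule Tnn)
  qed
  have "T summable_on S" unfolding SU by (rule summable_on_union[OF sum1 sum2])
  thus ?thesis by (simp add: T_def S_def)
qed

end
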